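(* Let $\beta_1,\beta_2>0$, $\nu_1,\nu_2\in(0,1)$, $\rho_1,\rho_2\in(0,1)$, and define \[ A=\beta_1(1-\nu_1)+\beta_2(1-\nu_2),\quad a=\beta_1(1-\nu_1)-\beta_2(1-\nu_2),\quad B=\beta_1\nu_1+\beta_2\nu_2,\quad b=-\beta_1\nu_1+\beta_2\nu_2, \] \[ D=\beta_1(1-\nu_1)(1-\rho_1)+\beta_2(1-\nu_2)(1-\rho_2),\qquad d=-\beta_1(1-\nu_1)(1-\rho_1)+\beta_2(1-\nu_2)(1-\rho_2). \] Assume $1-\frac{DB-bd}{AB+ba}>0$ and set $z_0=\ln\!\Big(1-\frac{DB-bd}{AB+ba}\Big)$. Consider the system on $\mathbb{R}^3$ \[ \dot z=e^{z_0}(1-e^{z})-u+\frac{b}{B}\,w,\qquad \dot u=\Big(A+\frac{ba}{B}\Big)e^{z_0}(e^{z}-1),\qquad \dot w=a\,e^{z_0}(e^{z}-1)-B\,w . \] If $B^2>ab$, then this system is globally stable, with all solutions tending to $(0,0,0)$ as $t\to\infty$.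
   Context: The system is obtained from the two-group resource–consumption model $\dot x=(1-x)x-(y_1+y_2)x$, $\dot y_1=\beta_1((1-\nu_1)(x-\rho_1)-\nu_1(y_1-y_2))$, $\dot y_2=\beta_2((1-\nu_2)(x-\rho_2)-\nu_2(y_2-y_1))$ by shifting its equilibrium to the origin after the substitutions $\ln x$, $y_1+y_2$, $y_1-y_2$; $e^{z_0}$ is the equilibrium resource level. *)

theory Defs
  imports "HOL-Analysis.Analysis"
begin

definition vf :: "real \<Rightarrow> real \<Rightarrow> real \<Rightarrow> real \<Rightarrow> real \<Rightarrow> real \<times> real \<times> real \<Rightarrow> real \<times> real \<times> real" where
  "vf A a B b z0 = (\<lambda>(z, u, w).
     (exp z0 * (1 - exp z) - u + (b / B) * w,
      (A + b * a / B) * exp z0 * (exp z - 1),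
      a * exp z0 * (exp z - 1) - B * w))"

definition is_solution :: "(real \<times> real \<times> real \<Rightarrow> real \<times> real \<times> real) \<Rightarrow> (real \<Rightarrow> real \<times> real \<times> real) \<Rightarrow> bool" where
  "is_solution f x \<longleftrightarrow> (\<forall>t\<ge>0. (x has_vector_derivative f (x t)) (at t within {0..}))"

definition globally_asymptotically_stable :: "(real \<times> real \<times> real \<Rightarrow> real \<times> real \<times> real) \<Rightarrow> bool" where
  "globally_asymptotically_stable f \<longleftrightarrow>
     (\<forall>x0. \<exists>x. is_solution f x \<and> x 0 = x0) \<and>
     (\<forall>e>0. \<exists>d>0. \<forall>x. is_solution f x \<and> norm (x 0) < d \<longrightarrow> (\<forall>t\<ge>0. norm (x t) < e)) \<and>
     (\<forall>x. is_solution f x \<longrightarrow> (x \<longlongrightarrow> 0) at_top)"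

end

theory Submission
  imports Defs "HOL-Analysis.Analysis"
begin
fun picard :: "('a::banach \<Rightarrow> 'a) \<Rightarrow> 'a \<Rightarrow> nat \<Rightarrow> real \<Rightarrow> 'a" where
  "picard f x0 0 = (\<lambda>t. x0)"
| "picard f x0 (Suc n) = (\<lambda>t. x0 + integral {0..t} (\<lambda>s. f (picard f x0 n s)))"

lemma within_eq: "0 \<le> (t::real) \<Longrightarrow> at t within {0..} = at t within {0..t+1}"
  by (rule at_within_nhd[of t "{..<t+1}"]) auto

lemma cont_int:
  fixes g :: "real \<Rightarrow> 'a::banach"
  assumes "continuous_on {0..} g"
  shows "continuous_on {0..} (\<lambda>t. integral {0..t} g)"
  unfolding continuous_on_eq_continuous_within
proof
  fix t :: real assume t: "t \<in> {0..}"
  have "((\<lambda>u. integral {0..u} g) has_vector_derivative g t) (at t within {0..t+1})"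
    by (rule integral_has_vector_derivative) (use t in \<open>auto intro: continuous_on_subset[OF assms]\<close>)
  then have "continuous (at t within {0..t+1}) (\<lambda>u. integral {0..u} g)"
    by (rule has_vector_derivative_continuous)
  then show "continuous (at t within {0..}) (\<lambda>u. integral {0..u} g)"
    using within_eq t by simp
qed

lemma picard_cont:
  fixes f :: "'a::banach \<Rightarrow> 'a"
  assumes cf: "continuous_on UNIV f"
  shows "continuous_on {0..} (picard f x0 n)"
proof (induction n)
  case 0 then show ?case by simp
next
  case (Suc n)
  have "continuous_on {0..} (\<lambda>s. f (picard f x0 n s))"
    by (rule continuous_on_compose2[OF cf Suc]) auto
  then show ?case by (auto intro!: continuous_intros cont_int)
qed

lemma picard_bound:
  fixes f :: "'a::banach \<Rightarrow> 'a"
  assumes lip: "\<And>x y. norm (f x - f y) \<le> L * norm (x - y)" and L: "L > 0"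
  shows "t \<ge> 0 \<Longrightarrow> norm (picard f x0 (Suc n) t - picard f x0 n t)
      \<le> norm (f x0) / L * (L * t) ^ Suc n / fact (Suc n)"
proof (induction n arbitrary: t)
  case 0
  have "integral {0..t} (\<lambda>s. f x0) = t *\<^sub>R f x0" using 0 by simp
  then show ?case using 0 L by simp
next
  case (Suc n)
  have cf: "continuous_on UNIV f"
  proof -
    have "L-lipschitz_on UNIV f" by (rule lipschitz_onI) (use lip L in \<open>auto simp: dist_norm\<close>)
    then show ?thesis by (rule lipschitz_on_continuous_on)
  qed
  have c: "continuous_on {0..t} (\<lambda>s. f (picard f x0 m s))" for m
    by (rule continuous_on_compose2[OF cf continuous_on_subset[OF picard_cont[OF cf]]]) auto
  have i: "(\<lambda>s. f (picard f x0 m s)) integrable_on {0..t}" for m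
    using c by (rule integrable_continuous_real)
  define N where "N = norm (f x0)"
  define K where "K = N / L * L ^ Suc (Suc n) / fact (Suc (Suc n))"
  have fe: "(\<lambda>s. N / L * (L * s) ^ Suc (Suc n) / fact (Suc (Suc n))) = (\<lambda>s. K * s ^ Suc (Suc n))"
    by (auto simp: K_def power_mult_distrib)
  have alg: "N / L * (L * P) / (m * F) * (m * Q) = L * (N / L * (P * Q) / F)"
    if "m > 0" "F > 0" for m F P Q :: real
    using that L by (simp add: field_simps)
  have ke: "K * (real (Suc (Suc n)) * s ^ Suc n) = L * (N / L * (L * s) ^ Suc n / fact (Suc n))" for s
  proof -
    have "fact (Suc (Suc n)) = (real (Suc (Suc n))) * (fact (Suc n) :: real)"
      by (simp only: fact_Suc[of "Suc n"] of_nat_mult)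
    then show ?thesis unfolding K_def power_mult_distrib power_Suc[of L "Suc n"]
      by (simp only: alg[of "real (Suc (Suc n))" "fact (Suc n)"] of_nat_0_less_iff zero_less_Suc fact_gt_zero)
  qed
  have der: "((\<lambda>s. N / L * (L * s) ^ Suc (Suc n) / fact (Suc (Suc n))) has_vector_derivative
        L * (N / L * (L * s) ^ Suc n / fact (Suc n))) (at s within {0..t})" for s
    unfolding has_real_derivative_iff_has_vector_derivative[symmetric] fe ke[symmetric]
  proof -
    have pw: "((\<lambda>s. s ^ Suc (Suc n)) has_real_derivative (real (Suc (Suc n)) * s ^ Suc n)) (at s)"
      using DERIV_pow[of "Suc (Suc n)" s] by simp
    show "((\<lambda>s. K * s ^ Suc (Suc n)) has_real_derivative K * (real (Suc (Suc n)) * s ^ Suc n)) (at s within {0..t})"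
      by (rule has_field_derivative_at_within[OF DERIV_cmult[OF pw]])
  qed
  have hi: "((\<lambda>s. L * (N / L * (L * s) ^ Suc n / fact (Suc n))) has_integral
       N / L * (L * t) ^ Suc (Suc n) / fact (Suc (Suc n))) {0..t}"
    using fundamental_theorem_of_calculus[OF Suc.prems der] by simp
  have "picard f x0 (Suc (Suc n)) t - picard f x0 (Suc n) t =
     integral {0..t} (\<lambda>s. f (picard f x0 (Suc n) s)) - integral {0..t} (\<lambda>s. f (picard f x0 n s))"
    by simp
  also have "\<dots> = integral {0..t} (\<lambda>s. f (picard f x0 (Suc n) s) - f (picard f x0 n s))"
    by (rule integral_diff[OF i i, symmetric])
  also have "norm \<dots> \<le> integral {0..t} (\<lambda>s. L * (N / L * (L * s) ^ Suc n / fact (Suc n)))"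
  proof (rule integral_norm_bound_integral)
    show "(\<lambda>s. f (picard f x0 (Suc n) s) - f (picard f x0 n s)) integrable_on {0..t}"
      by (rule integrable_diff[OF i i])
    show "(\<lambda>s. L * (N / L * (L * s) ^ Suc n / fact (Suc n))) integrable_on {0..t}"
      using hi by blast
    fix s assume s: "s \<in> {0..t}"
    have "norm (f (picard f x0 (Suc n) s) - f (picard f x0 n s)) \<le> L * norm (picard f x0 (Suc n) s - picard f x0 n s)"
      by (rule lip)
    also have "\<dots> \<le> L * (N / L * (L * s) ^ Suc n / fact (Suc n))"
      using Suc.IH[of s] s L unfolding N_def by (intro mult_left_mono) auto
    finally show "norm (f (picard f x0 (Suc n) s) - f (picard f x0 n s)) \<le> L * (N / L * (L * s) ^ Suc n / fact (Suc n))" .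
  qed
  also have "\<dots> = N / L * (L * t) ^ Suc (Suc n) / fact (Suc (Suc n))"
    using hi by (rule integral_unique)
  finally show ?case unfolding N_def .
qed

lemma lip_cont:
  fixes f :: "'a::banach \<Rightarrow> 'a"
  assumes lip: "\<And>x y. norm (f x - f y) \<le> L * norm (x - y)" and L: "L > 0"
  shows "continuous_on UNIV f"
proof -
  have "L-lipschitz_on UNIV f" by (rule lipschitz_onI) (use lip L in \<open>auto simp: dist_norm\<close>)
  then show ?thesis by (rule lipschitz_on_continuous_on)
qed

lemma picard_exists:
  fixes f :: "'a::banach \<Rightarrow> 'a"
  assumes lip: "\<And>x y. norm (f x - f y) \<le> L * norm (x - y)" and L: "L > 0"
  shows "\<exists>x. (\<forall>t\<ge>0. (x has_vector_derivative f (x t)) (at t within {0..})) \<and> x 0 = x0"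
proof -
  define P where "P = picard f x0"
  define d where "d i t = P (Suc i) t - P i t" for i t
  define x where "x t = x0 + (\<Sum>i. d i t)" for t
  have cf: "continuous_on UNIV f" by (rule lip_cont[OF lip L])
  have ul: "uniform_limit {0..T} P x sequentially" if T: "T \<ge> 0" for T
  proof -
    define M where "M i = norm (f x0) / L * ((L * T) ^ Suc i / fact (Suc i))" for i
    have "summable (\<lambda>n. inverse (fact n) * (L * T) ^ n)" by (rule summable_exp)
    then have "summable (\<lambda>n. inverse (fact (Suc n)) * (L * T) ^ Suc n)"
      using summable_Suc_iff[of "\<lambda>n. inverse (fact n) * (L * T) ^ n"] by blast
    then have sM: "summable M" unfolding M_def
      by (intro summable_mult) (simp add: divide_inverse mult.commute)
    have bnd: "norm (d i t) \<le> M i" if "t \<in> {0..T}" for i t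
    proof -
      have "norm (d i t) \<le> norm (f x0) / L * (L * t) ^ Suc i / fact (Suc i)"
        unfolding d_def P_def using picard_bound[OF lip L] that by auto
      also have "\<dots> \<le> M i"
      proof -
        have "(L * t) ^ Suc i \<le> (L * T) ^ Suc i" using that L by (intro power_mono) auto
        then show ?thesis unfolding M_def using L
          by (simp add: divide_right_mono mult_left_mono del: power_Suc)
      qed
      finally show ?thesis .
    qed
    have w: "uniform_limit {0..T} (\<lambda>n t. \<Sum>i<n. d i t) (\<lambda>t. \<Sum>i. d i t) sequentially"
      by (rule Weierstrass_m_test[OF bnd sM])
    have Pe: "P n t = x0 + (\<Sum>i<n. d i t)" for n t
      unfolding d_def using sum_lessThan_telescope[of "\<lambda>i. P i t" n] by (simp add: P_def)
    show ?thesis using w unfolding uniform_limit_iff Pe x_def dist_norm by simp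
  qed
  have cP: "continuous_on {0..T} (P n)" for n T
    unfolding P_def by (rule continuous_on_subset[OF picard_cont[OF cf]]) auto
  have cx: "continuous_on {0..T} x" if "T \<ge> 0" for T
    by (rule uniform_limit_theorem[OF _ ul[OF that]]) (auto intro: cP always_eventually)
  have cfx: "continuous_on {0..T} (\<lambda>s. f (x s))" if "T \<ge> 0" for T
    by (rule continuous_on_compose2[OF cf cx[OF that]]) auto
  have ulf: "uniform_limit {0..T} (\<lambda>n s. f (P n s)) (\<lambda>s. f (x s)) sequentially" if "T \<ge> 0" for T
    unfolding uniform_limit_iff
  proof (intro allI impI)
    fix e :: real assume e: "e > 0"
    then have "\<forall>\<^sub>F n in sequentially. \<forall>s\<in>{0..T}. dist (P n s) (x s) < e / L"
      using ul[OF that] L unfolding uniform_limit_iff by simp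
    then show "\<forall>\<^sub>F n in sequentially. \<forall>s\<in>{0..T}. dist (f (P n s)) (f (x s)) < e"
    proof (rule eventually_mono, intro ballI)
      fix n s assume h: "\<forall>s\<in>{0..T}. dist (P n s) (x s) < e / L" and s: "s \<in> {0..T}"
      have "dist (f (P n s)) (f (x s)) \<le> L * dist (P n s) (x s)"
        using lip by (simp add: dist_norm)
      also have "\<dots> < L * (e / L)" using h s L by (intro mult_strict_left_mono) auto
      finally show "dist (f (P n s)) (f (x s)) < e" using L by simp
    qed
  qed
  have ieq: "x s = x0 + integral {0..s} (\<lambda>r. f (x r))" if s: "s \<ge> 0" for s
  proof -
    obtain I J where I: "\<And>n. ((\<lambda>r. f (P n r)) has_integral I n) {0..s}"
      and J: "((\<lambda>r. f (x r)) has_integral J) {0..s}" and IJ: "I \<longlonglongrightarrow> J"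
      by (rule uniform_limit_integral[OF ulf[OF s]]) (auto intro: continuous_on_compose2[OF cf cP])
    have "(\<lambda>n. P (Suc n) s) \<longlonglongrightarrow> x0 + J"
    proof -
      have "integral {0..s} (\<lambda>r. f (P n r)) = I n" for n using I[of n] by (rule integral_unique)
      then show ?thesis using tendsto_add[OF tendsto_const[of x0] IJ] by (simp add: P_def)
    qed
    moreover have "(\<lambda>n. P n s) \<longlonglongrightarrow> x s"
      using tendsto_uniform_limitI[OF ul[OF s], of s] s by simp
    then have "(\<lambda>n. P (Suc n) s) \<longlonglongrightarrow> x s" by (rule LIMSEQ_Suc)
    ultimately show ?thesis using J integral_unique LIMSEQ_unique by metis
  qed
  have "(x has_vector_derivative f (x t)) (at t within {0..})" if t: "t \<ge> 0" for t
  proof -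
    have iv: "((\<lambda>u. integral {0..u} (\<lambda>r. f (x r))) has_vector_derivative f (x t)) (at t within {0..t+1})"
      by (rule integral_has_vector_derivative[OF cfx]) (use t in auto)
    have "((\<lambda>u. x0 + integral {0..u} (\<lambda>r. f (x r))) has_vector_derivative f (x t)) (at t within {0..t+1})"
      using has_vector_derivative_add[OF has_vector_derivative_const[of x0] iv] by simp
    then have "(x has_vector_derivative f (x t)) (at t within {0..t+1})"
      by (rule has_vector_derivative_transform[of t "{0..t+1}", rotated 2]) (use t ieq in auto)
    then show ?thesis using within_eq[OF t] by simp
  qed
  moreover have "x 0 = x0" using ieq[of 0] by simp
  ultimately show ?thesis by blast
qed

lemma comps:
  fixes x :: "real \<Rightarrow> real \<times> real \<times> real"
  assumes "(x has_vector_derivative v) F"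
  shows "((\<lambda>t. fst (x t)) has_real_derivative fst v) F"
    "((\<lambda>t. fst (snd (x t))) has_real_derivative fst (snd v)) F"
    "((\<lambda>t. snd (snd (x t))) has_real_derivative snd (snd v)) F"
proof -
  have d: "(x has_derivative (\<lambda>h. h *\<^sub>R v)) F" using assms by (simp add: has_vector_derivative_def)
  show "((\<lambda>t. fst (x t)) has_real_derivative fst v) F"
    unfolding has_field_derivative_def
    by (rule has_derivative_eq_rhs[OF has_derivative_fst[OF d]]) (simp add: fun_eq_iff mult.commute)
  have d2: "((\<lambda>t. snd (x t)) has_derivative (\<lambda>h. h *\<^sub>R snd v)) F"
    using has_derivative_snd[OF d] by simp
  show "((\<lambda>t. fst (snd (x t))) has_real_derivative fst (snd v)) F"
    unfolding has_field_derivative_def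
    by (rule has_derivative_eq_rhs[OF has_derivative_fst[OF d2]]) (simp add: fun_eq_iff mult.commute)
  show "((\<lambda>t. snd (snd (x t))) has_real_derivative snd (snd v)) F"
    unfolding has_field_derivative_def
    by (rule has_derivative_eq_rhs[OF has_derivative_snd[OF d2]]) (simp add: fun_eq_iff mult.commute)
qed

lemma exp_strict: "x \<noteq> 0 \<Longrightarrow> 1 + x < exp (x::real)"
proof -
  assume x: "x \<noteq> 0"
  show ?thesis
  proof (cases "1 + x/2 \<ge> 0")
    case True
    have "(1 + x/2)^2 \<le> exp (x/2) ^ 2"
      using True by (intro power_mono) (use exp_ge_add_one_self[of "x/2"] in auto)
    also have "\<dots> = exp x" by (simp add: exp_double[symmetric] power2_eq_square exp_add[symmetric])
    finally have "(1 + x/2)^2 \<le> exp x" .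
    moreover have "1 + x < (1 + x/2)^2" using x by (simp add: power2_eq_square field_simps) (metis not_real_square_gt_zero)
    ultimately show ?thesis by linarith
  next
    case False
    then have "1 + x < 0" by linarith
    then show ?thesis using exp_gt_zero[of x] by linarith
  qed
qed

lemma exp_2x: "2 * x \<le> exp (x::real)"
proof (cases "x \<le> 0")
  case True then show ?thesis using exp_gt_zero[of x] by linarith
next
  case False
  have "(1 + x/2)^2 \<le> exp (x/2) ^ 2"
    using False by (intro power_mono) (use exp_ge_add_one_self[of "x/2"] in auto)
  also have "\<dots> = exp x" by (simp add: power2_eq_square exp_add[symmetric])
  finally have "(1 + x/2)^2 \<le> exp x" .
  moreover have "2 * x \<le> (1 + x/2)^2"
  proof -
    have "0 \<le> (1 - x/2)^2" by simp
    then show ?thesis by (simp add: power2_eq_square field_simps)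
  qed
  ultimately show ?thesis by linarith
qed

locale sys =
  fixes A a B b z0 :: real
  assumes Bpos: "B > 0" and Kpos0: "A + b * a / B > 0" and disc: "a * b < B^2"
begin

definition "K = A + b * a / B"
definition "c = exp z0"
definition "F = vf A a B b z0"

lemma K: "K > 0" using Kpos0 K_def by simp
lemma c: "c > 0" by (simp add: c_def)

lemma F_eq: "F (z, u, w) = (c * (1 - exp z) - u + (b / B) * w, K * c * (exp z - 1), a * c * (exp z - 1) - B * w)"
  by (simp add: F_def vf_def c_def K_def)

lemma s_ex: "\<exists>s>0. (K * b / B + s * a)^2 < 4 * K * s * B"
proof (cases "a = 0")
  case True
  define s where "s = K * (b/B)^2 / B + 1"
  have "K * (b/B)^2 / B \<ge> 0" using K Bpos by simp
  then have s0: "s > 0" by (simp add: s_def)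
  have "4 * K * s * B = 4 * K^2 * (b/B)^2 + 4 * K * B"
    using Bpos by (simp add: s_def field_simps power2_eq_square)
  moreover have "(K * b / B + s * a)^2 = K^2 * (b/B)^2"
    using True by (simp add: power2_eq_square)
  moreover have "0 \<le> K^2 * (b/B)^2" by simp
  moreover have "0 < K * B" using K Bpos by simp
  ultimately have "(K * b / B + s * a)^2 < 4 * K * s * B" by linarith
  then show ?thesis using s0 by blast
next
  case False
  define s where "s = K * (2 * B^2 - a * b) / (a^2 * B)"
  have "0 \<le> B^2" by simp
  then have "a * b < 2 * B^2" using disc by linarith
  then have s0: "s > 0" using K Bpos disc False unfolding s_def
    by (intro divide_pos_pos mult_pos_pos) auto
  have e1: "K * b / B + s * a = 2 * K * B / a"
    using False Bpos unfolding s_def by (simp add: field_simps power2_eq_square)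
  have e2: "4 * K * s * B = 4 * K^2 * (2 * B^2 - a * b) / a^2"
    using False Bpos unfolding s_def by (simp add: field_simps power2_eq_square)
  have "(2 * K * B / a)^2 = 4 * K^2 * B^2 / a^2" by (simp add: power2_eq_square field_simps)
  also have "\<dots> < 4 * K^2 * (2 * B^2 - a * b) / a^2"
    using disc False K by (intro divide_strict_right_mono mult_strict_left_mono) auto
  finally show ?thesis using s0 e1 e2 by auto
qed

definition "sL = (SOME s. s > 0 \<and> (K * b / B + s * a)^2 < 4 * K * s * B)"
lemma sL: "sL > 0" "(K * b / B + sL * a)^2 < 4 * K * sL * B"
proof -
  have "\<exists>s. s > 0 \<and> (K * b / B + s * a)^2 < 4 * K * s * B" using s_ex by blast
  from someI_ex[OF this] show "sL > 0" "(K * b / B + sL * a)^2 < 4 * K * sL * B"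
    unfolding sL_def by auto
qed


definition "m = K * b / B + sL * a"
definition "G z = c * (exp z - 1 - z)"
definition "phi z = c * (exp z - 1)"
definition "V p = K * G (fst p) + (fst (snd p))^2 / 2 + sL / 2 * (snd (snd p))^2"
definition "Q p = K * (phi (fst p))^2 - m * phi (fst p) * snd (snd p) + sL * B * (snd (snd p))^2"
definition "hh p = (phi (fst p))^2 + (snd (snd p))^2"
definition "g1 = K - m^2 / (4 * sL * B)"
definition "g2 = sL * B - m^2 / (4 * K)"
definition "gam = min g1 g2 / 2"

lemma g12: "g1 > 0" "g2 > 0" "gam > 0"
proof -
  have m2: "m^2 < 4 * K * sL * B" using sL(2) m_def by simp
  have p: "0 < sL * B" "0 < K" using sL(1) Bpos K by auto
  have "m^2 / (4 * sL * B) < K" using m2 p by (simp add: divide_less_eq mult.commute mult.left_commute)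
  then show "g1 > 0" by (simp add: g1_def)
  have "m^2 / (4 * K) < sL * B" using m2 p by (simp add: divide_less_eq mult.commute mult.left_commute)
  then show "g2 > 0" by (simp add: g2_def)
  then show "gam > 0" using \<open>g1 > 0\<close> by (simp add: gam_def)
qed

lemma Q_ge: "Q p \<ge> gam * hh p"
proof -
  define f where "f = phi (fst p)"
  define w where "w = snd (snd p)"
  have p: "0 < sL * B" "0 < K" using sL(1) Bpos K by auto
  have e1: "Q p - g1 * f^2 = sL * B * (w - m * f / (2 * sL * B))^2"
    using p unfolding Q_def g1_def f_def w_def by (simp add: field_simps power2_eq_square Bpos[THEN less_imp_neq, symmetric] sL(1)[THEN less_imp_neq, symmetric])
  have e2: "Q p - g2 * w^2 = K * (f - m * w / (2 * K))^2"
    using p unfolding Q_def g2_def f_def w_def by (simp add: field_simps power2_eq_square)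
  have "Q p \<ge> g1 * f^2" using e1 p by (smt (verit) mult_nonneg_nonneg zero_le_power2)
  moreover have "Q p \<ge> g2 * w^2" using e2 p by (smt (verit) mult_nonneg_nonneg zero_le_power2)
  moreover have "gam * f^2 \<le> g1 * f^2 / 2" "gam * w^2 \<le> g2 * w^2 / 2"
    unfolding gam_def by (auto intro!: mult_right_mono simp: min_def)
  ultimately show ?thesis unfolding hh_def f_def[symmetric] w_def[symmetric] by (simp add: algebra_simps)
qed

lemma hh_ge: "hh p \<ge> 0" by (simp add: hh_def)

lemma G_ge: "G z \<ge> 0"
proof -
  have "0 \<le> exp z - 1 - z" using exp_ge_add_one_self[of z] by linarith
  then show ?thesis using c by (simp add: G_def)
qed
lemma V_ge: "V p \<ge> 0" using G_ge[of "fst p"] K sL(1) by (simp add: V_def)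

lemma V_deriv:
  assumes "(x has_vector_derivative F (x t)) (at t within S)"
  shows "((\<lambda>t. V (x t)) has_real_derivative - Q (x t)) (at t within S)"
proof -
  obtain z u w where xt: "x t = (z, u, w)" by (cases "x t") auto
  note d = comps[OF assms, unfolded xt F_eq, simplified]
  have e: "(\<lambda>t. V (x t)) = (\<lambda>t. K * (c * (exp (fst (x t)) - 1 - fst (x t))) + (fst (snd (x t)))^2 / 2
       + sL / 2 * (snd (snd (x t)))^2)" by (simp add: V_def G_def)
  show ?thesis unfolding e
    apply (rule derivative_eq_intros d | simp)+
    using Bpos by (simp add: xt Q_def phi_def m_def field_simps power2_eq_square)
qed


lemma at_pos: "(s::real) > 0 \<Longrightarrow> at s within {0..} = at s"
  by (rule at_within_interior) simp

lemma cont_from_deriv: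
  fixes f :: "real \<Rightarrow> real"
  assumes "\<And>s. s \<in> {t1..t2} \<Longrightarrow> \<exists>D. (f has_real_derivative D) (at s within {0..})" "0 \<le> t1"
  shows "continuous_on {t1..t2} f"
  unfolding continuous_on_eq_continuous_within
proof
  fix s assume s: "s \<in> {t1..t2}"
  then obtain D where "(f has_real_derivative D) (at s within {0..})" using assms(1) by blast
  then have "continuous (at s within {0..}) f" by (rule DERIV_continuous)
  then show "continuous (at s within {t1..t2}) f"
    by (rule continuous_within_subset) (use assms(2) in auto)
qed

lemma V_dec:
  assumes d: "\<And>s. s \<in> {t1..t2} \<Longrightarrow> (x has_vector_derivative F (x s)) (at s within {0..})"
    and t: "0 \<le> t1" "t1 \<le> t2" and h: "\<And>s. s \<in> {t1..t2} \<Longrightarrow> hh (x s) \<ge> \<delta>"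
  shows "V (x t2) + gam * \<delta> * (t2 - t1) \<le> V (x t1)"
proof -
  define f where "f s = V (x s) + gam * \<delta> * s" for s
  have fd: "(f has_real_derivative - Q (x s) + gam * \<delta>) (at s within {0..})" if "s \<in> {t1..t2}" for s
    unfolding f_def using V_deriv[OF d[OF that]]
    by (auto intro!: derivative_eq_intros)
  have "f t2 \<le> f t1"
  proof (rule DERIV_nonpos_imp_decreasing_open[OF t(2)])
    fix s assume s: "t1 < s" "s < t2"
    then have "(f has_real_derivative - Q (x s) + gam * \<delta>) (at s)"
      using fd[of s] at_pos[of s] t by auto
    moreover have "- Q (x s) + gam * \<delta> \<le> 0"
    proof -
      have "gam * \<delta> \<le> gam * hh (x s)" using h[of s] s g12(3) by (intro mult_left_mono) auto
      then show ?thesis using Q_ge[of "x s"] by linarith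
    qed
    ultimately show "\<exists>y. (f has_real_derivative y) (at s) \<and> y \<le> 0" by blast
  next
    show "continuous_on {t1..t2} f" using fd by (intro cont_from_deriv[OF _ t(1)]) blast
  qed
  then show ?thesis unfolding f_def by (simp add: algebra_simps)
qed


end

context sys begin

lemma G_lin: "G z \<ge> c * (\<bar>z\<bar> - 1)"
proof (cases "z \<ge> 0")
  case True
  have "2 * z \<le> exp z" by (rule exp_2x)
  then have "\<bar>z\<bar> - 1 \<le> exp z - 1 - z" using True by simp
  then show ?thesis unfolding G_def using c by (intro mult_left_mono) auto
next
  case False
  have "\<bar>z\<bar> - 1 \<le> exp z - 1 - z" using False exp_gt_zero[of z] by simp
  then show ?thesis unfolding G_def using c by (intro mult_left_mono) auto
qed

lemma exp_sub_le: "y \<le> (x::real) \<Longrightarrow> x \<le> M \<Longrightarrow> exp x - exp y \<le> exp M * (x - y)"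
proof -
  assume yx: "y \<le> x" and xM: "x \<le> M"
  have "exp x * (1 + (y - x)) \<le> exp x * exp (y - x)"
    by (intro mult_left_mono) auto
  also have "\<dots> = exp y" by (simp add: exp_diff)
  finally have "exp x - exp y \<le> exp x * (x - y)" by (simp add: algebra_simps)
  also have "\<dots> \<le> exp M * (x - y)" using yx xM by (intro mult_right_mono) auto
  finally show ?thesis .
qed

lemma G_mono: "0 \<le> r \<Longrightarrow> r \<le> \<bar>z\<bar> \<Longrightarrow> min (G r) (G (-r)) \<le> G z"
proof -
  assume r: "0 \<le> r" "r \<le> \<bar>z\<bar>"
  show ?thesis
  proof (cases "z \<ge> 0")
    case True
    have "exp r * (1 + (z - r)) \<le> exp r * exp (z - r)" by (intro mult_left_mono) auto
    also have "\<dots> = exp z" by (simp add: exp_diff)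
    finally have "exp r * (z - r) \<le> exp z - exp r" by (simp add: algebra_simps)
    moreover have "z - r \<le> exp r * (z - r)"
      using mult_right_mono[of 1 "exp r" "z - r"] r True by simp
    ultimately have "exp r - 1 - r \<le> exp z - 1 - z" by linarith
    then have "G r \<le> G z" unfolding G_def using c by (intro mult_left_mono) auto
    then show ?thesis by linarith
  next
    case False
    have "exp (-r) * (1 + (z + r)) \<le> exp (-r) * exp (z + r)" by (intro mult_left_mono) auto
    also have "\<dots> = exp z" by (simp add: exp_add[symmetric])
    finally have "exp (-r) * (z + r) \<le> exp z - exp (-r)" by (simp add: algebra_simps)
    moreover have "z + r \<le> exp (-r) * (z + r)"
    proof -
      have "z + r \<le> 0" using r False by simp
      moreover have "exp (-r) \<le> 1" using r by simp
      ultimately show ?thesis using mult_right_mono_neg[of "exp (-r)" 1 "z + r"] by simp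
    qed
    ultimately have "exp (-r) - 1 - (-r) \<le> exp z - 1 - z" by linarith
    then have "G (-r) \<le> G z" unfolding G_def using c by (intro mult_left_mono) auto
    then show ?thesis by linarith
  qed
qed

lemma G_pos: "r \<noteq> 0 \<Longrightarrow> G r > 0"
  using exp_strict[of r] c unfolding G_def by simp

lemma V_geG: "V p \<ge> K * G (fst p)"
  using sL(1) by (simp add: V_def)


definition "Ecl M (z::real) = exp (max (-M) (min M z))"
definition "FM M p = (c * (1 - Ecl M (fst p)) - fst (snd p) + (b / B) * snd (snd p),
    K * c * (Ecl M (fst p) - 1), a * c * (Ecl M (fst p) - 1) - B * snd (snd p))"

lemma FM_eq: "\<bar>fst p\<bar> \<le> M \<Longrightarrow> FM M p = F p"
  by (cases p) (auto simp: FM_def F_eq Ecl_def)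

lemma Ecl_lip: "M \<ge> 0 \<Longrightarrow> \<bar>Ecl M x - Ecl M y\<bar> \<le> exp M * \<bar>x - y\<bar>"
proof -
  assume M: "M \<ge> 0"
  define x' where "x' = max (-M) (min M x)"
  define y' where "y' = max (-M) (min M y)"
  have d: "\<bar>x' - y'\<bar> \<le> \<bar>x - y\<bar>" unfolding x'_def y'_def using M by (auto simp: max_def min_def abs_if)
  have b: "x' \<le> M" "y' \<le> M" using M unfolding x'_def y'_def by auto
  have "\<bar>exp x' - exp y'\<bar> \<le> exp M * \<bar>x' - y'\<bar>"
  proof (cases "y' \<le> x'")
    case True then show ?thesis using exp_sub_le[OF True b(1)] by simp
  next
    case False then show ?thesis using exp_sub_le[of x' y' M] b by simp
  qed
  also have "\<dots> \<le> exp M * \<bar>x - y\<bar>" using d by simp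
  finally show ?thesis unfolding Ecl_def x'_def y'_def .
qed

definition "LM M = c * exp M * (1 + K + \<bar>a\<bar>) + 1 + \<bar>b / B\<bar> + B"

lemma LM_pos: "LM M > 0"
proof -
  have "0 \<le> c * exp M * (1 + K + \<bar>a\<bar>)" using c K by simp
  moreover have "0 \<le> \<bar>b / B\<bar>" by simp
  ultimately show ?thesis using Bpos unfolding LM_def by linarith
qed

lemma FM_lip: "M \<ge> 0 \<Longrightarrow> norm (FM M p - FM M q) \<le> LM M * norm (p - q)"
proof -
  assume M: "M \<ge> 0"
  obtain z1 u1 w1 where p: "p = (z1, u1, w1)" by (cases p) auto
  obtain z2 u2 w2 where q: "q = (z2, u2, w2)" by (cases q) auto
  define n where "n = norm (p - q)"
  have nz: "\<bar>z1 - z2\<bar> \<le> n" unfolding n_def p q using norm_fst_le[of "z1 - z2" "(u1 - u2, w1 - w2)"] by simp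
  have nuw: "norm (u1 - u2, w1 - w2) \<le> n" unfolding n_def p q using norm_snd_le[of "(u1 - u2, w1 - w2)" "z1 - z2"] by simp
  have nu: "\<bar>u1 - u2\<bar> \<le> n" using nuw norm_fst_le[of "u1 - u2" "w1 - w2"] by simp
  have nw: "\<bar>w1 - w2\<bar> \<le> n" using nuw norm_snd_le[of "w1 - w2" "u1 - u2"] by simp
  define e where "e = Ecl M z1 - Ecl M z2"
  have ne: "\<bar>e\<bar> \<le> exp M * n" unfolding e_def using Ecl_lip[OF M, of z1 z2] nz
    by (meson exp_ge_zero mult_left_mono order_trans)
  define d1 where "d1 = - c * e - (u1 - u2) + (b / B) * (w1 - w2)"
  define d2 where "d2 = K * c * e"
  define d3 where "d3 = a * c * e - B * (w1 - w2)"
  have FMd: "FM M p - FM M q = (d1, d2, d3)"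
    unfolding FM_def p q d1_def d2_def d3_def e_def by (simp add: right_diff_distrib left_diff_distrib)
  have ce: "\<bar>c * e\<bar> \<le> c * exp M * n" using ne c by (simp add: abs_mult mult.assoc)
  have "\<bar>d1\<bar> \<le> \<bar>c * e\<bar> + \<bar>u1 - u2\<bar> + \<bar>b / B\<bar> * \<bar>w1 - w2\<bar>"
  proof -
    have "\<bar>(b / B) * (w1 - w2)\<bar> = \<bar>b / B\<bar> * \<bar>w1 - w2\<bar>" by (rule abs_mult)
    then show ?thesis unfolding d1_def by arith
  qed
  also have "\<dots> \<le> c * exp M * n + n + \<bar>b / B\<bar> * n"
    using ce nu nw by (intro add_mono mult_left_mono) auto
  finally have h1: "\<bar>d1\<bar> \<le> c * exp M * n + n + \<bar>b / B\<bar> * n" .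
  have h2: "\<bar>d2\<bar> \<le> K * (c * exp M * n)" unfolding d2_def using ce K
    by (simp add: abs_mult mult.assoc mult_left_mono)
  have "\<bar>d3\<bar> \<le> \<bar>a\<bar> * \<bar>c * e\<bar> + B * \<bar>w1 - w2\<bar>"
  proof -
    have "\<bar>a * (c * e)\<bar> = \<bar>a\<bar> * \<bar>c * e\<bar>" by (rule abs_mult)
    moreover have "\<bar>B * (w1 - w2)\<bar> = B * \<bar>w1 - w2\<bar>" using Bpos by (simp add: abs_mult)
    moreover have "d3 = a * (c * e) - B * (w1 - w2)" unfolding d3_def by simp
    ultimately show ?thesis by arith
  qed
  also have "\<dots> \<le> \<bar>a\<bar> * (c * exp M * n) + B * n"
    using ce nw Bpos by (intro add_mono mult_left_mono) auto
  finally have h3: "\<bar>d3\<bar> \<le> \<bar>a\<bar> * (c * exp M * n) + B * n" .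
  have "norm (d1, d2, d3) \<le> \<bar>d1\<bar> + (\<bar>d2\<bar> + \<bar>d3\<bar>)"
    using norm_Pair_le[of d1 "(d2, d3)"] norm_Pair_le[of d2 d3] by simp
  also have "\<dots> \<le> LM M * n"
  proof -
    have "\<bar>d1\<bar> + (\<bar>d2\<bar> + \<bar>d3\<bar>) \<le> (c * exp M * n + n + \<bar>b / B\<bar> * n) + (K * (c * exp M * n) + (\<bar>a\<bar> * (c * exp M * n) + B * n))"
      using h1 h2 h3 by linarith
    also have "\<dots> = LM M * n" unfolding LM_def by (simp only: distrib_right distrib_left mult.assoc mult.commute mult.left_commute add.assoc mult_1_left)
    finally show ?thesis .
  qed
  finally show ?thesis using FMd n_def by simp
qed

end

context sys begin

lemma exists_sol: "\<exists>x. is_solution F x \<and> x 0 = x0"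
proof -
  define V0 where "V0 = V x0"
  define M where "M = \<bar>fst x0\<bar> + V0 / (K * c) + 2"
  have Kc: "K * c > 0" using K c by simp
  have V0: "V0 \<ge> 0" unfolding V0_def by (rule V_ge)
  have "V0 / (K * c) \<ge> 0" using V0 Kc by simp
  then have M0: "M \<ge> 0" and M1: "\<bar>fst x0\<bar> < M" unfolding M_def by auto
  have "V0 / (K * c) < M - 1" unfolding M_def by simp
  then have M2: "V0 < K * c * (M - 1)" using Kc by (simp add: pos_divide_less_eq mult.commute)
  obtain y where yd: "\<forall>t\<ge>0. (y has_vector_derivative FM M (y t)) (at t within {0..})" and y0: "y 0 = x0"
    using picard_exists[of "FM M" "LM M" x0, OF FM_lip[OF M0] LM_pos] by blast
  define Z where "Z t = fst (y t)" for t
  have Zd: "(Z has_real_derivative fst (FM M (y t))) (at t within {0..})" if "t \<ge> 0" for t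
    unfolding Z_def by (rule comps(1)) (use yd that in auto)
  have cZ: "continuous_on {0..t1} (\<lambda>t. \<bar>Z t\<bar>)" for t1
    by (intro continuous_on_rabs cont_from_deriv) (use Zd in auto)
  have bnd: "\<forall>t\<ge>0. \<bar>Z t\<bar> < M"
  proof (rule ccontr)
    assume "\<not> (\<forall>t\<ge>0. \<bar>Z t\<bar> < M)"
    then obtain t1 where t1: "t1 \<ge> 0" "\<bar>Z t1\<bar> \<ge> M" by (auto simp: not_less)
    have Z0: "\<bar>Z 0\<bar> < M" using M1 y0 Z_def by simp
    obtain t2 where t2: "0 \<le> t2" "t2 \<le> t1" "\<bar>Z t2\<bar> = M"
      using IVT'[of "\<lambda>t. \<bar>Z t\<bar>" 0 M t1] Z0 t1 cZ by auto
    define S where "S = {0..t1} \<inter> (\<lambda>t. \<bar>Z t\<bar>) -` {M}"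
    have cS: "closed S" unfolding S_def by (rule continuous_closed_preimage) (auto intro: cZ)
    have t2S: "t2 \<in> S" using t2 unfolding S_def by auto
    have bS: "bdd_below S" unfolding S_def by (rule bdd_belowI[of _ 0]) auto
    define \<tau> where "\<tau> = Inf S"
    have \<tau>S: "\<tau> \<in> S" unfolding \<tau>_def using closed_contains_Inf[OF _ bS cS] t2S by blast
    then have \<tau>: "0 \<le> \<tau>" "\<tau> \<le> t1" "\<bar>Z \<tau>\<bar> = M" unfolding S_def by auto
    have lt: "\<bar>Z s\<bar> \<le> M" if s: "0 \<le> s" "s \<le> \<tau>" for s
    proof (rule ccontr)
      assume "\<not> \<bar>Z s\<bar> \<le> M"
      then obtain s' where s': "0 \<le> s'" "s' \<le> s" "\<bar>Z s'\<bar> = M"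
        using IVT'[of "\<lambda>t. \<bar>Z t\<bar>" 0 M s] Z0 s cZ by auto
      then have "s' \<in> S" using s \<tau> unfolding S_def by auto
      then have "\<tau> \<le> s'" unfolding \<tau>_def using bS by (rule cInf_lower)
      then have "s = \<tau>" using s s' by simp
      then show False using \<open>\<not> \<bar>Z s\<bar> \<le> M\<close> \<tau> by simp
    qed
    have "V (y \<tau>) + gam * 0 * (\<tau> - 0) \<le> V (y 0)"
    proof (rule V_dec)
      fix s assume s: "s \<in> {0..\<tau>}"
      have "FM M (y s) = F (y s)" using lt[of s] s by (intro FM_eq) (auto simp: Z_def)
      then show "(y has_vector_derivative F (y s)) (at s within {0..})" using yd s by auto
    qed (use \<tau> in \<open>auto simp: hh_ge\<close>)
    then have "V (y \<tau>) \<le> V0" using y0 V0_def by simp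
    moreover have "K * c * (M - 1) \<le> V (y \<tau>)"
    proof -
      have "K * (c * (\<bar>Z \<tau>\<bar> - 1)) \<le> K * G (Z \<tau>)" using G_lin K by (intro mult_left_mono) auto
      then show ?thesis using V_geG[of "y \<tau>"] \<tau>(3) by (simp add: Z_def mult.assoc)
    qed
    ultimately show False using M2 by linarith
  qed
  have "is_solution F y" unfolding is_solution_def
  proof (intro allI impI)
    fix t :: real assume t: "t \<ge> 0"
    have "FM M (y t) = F (y t)" using bnd t by (intro FM_eq) (auto simp: Z_def less_imp_le)
    then show "(y has_vector_derivative F (y t)) (at t within {0..})" using yd t by auto
  qed
  then show ?thesis using y0 by blast
qed

end

context sys begin

lemma sol_d: "is_solution F x \<Longrightarrow> t \<ge> 0 \<Longrightarrow> (x has_vector_derivative F (x t)) (at t within {0..})"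
  by (simp add: is_solution_def)

lemma V_mono: "is_solution F x \<Longrightarrow> 0 \<le> t1 \<Longrightarrow> t1 \<le> t2 \<Longrightarrow> V (x t2) \<le> V (x t1)"
proof -
  assume sol: "is_solution F x" and t: "0 \<le> t1" "t1 \<le> t2"
  have "V (x t2) + gam * 0 * (t2 - t1) \<le> V (x t1)"
    by (rule V_dec) (use sol_d[OF sol] t in \<open>auto simp: hh_ge\<close>)
  then show ?thesis by simp
qed

lemma V_lim:
  assumes sol: "is_solution F x"
  obtains l where "l \<ge> 0" "((\<lambda>t. V (x t)) \<longlongrightarrow> l) at_top" "\<And>t. t \<ge> 0 \<Longrightarrow> l \<le> V (x t)"
proof -
  define I where "I = (\<lambda>t. V (x t)) ` {0..}"
  define l where "l = Inf I"
  have ne: "I \<noteq> {}" unfolding I_def by auto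
  have bb: "bdd_below I" unfolding I_def by (rule bdd_belowI[of _ 0]) (auto intro: V_ge)
  have lle: "l \<le> V (x t)" if "t \<ge> 0" for t unfolding l_def I_def
    by (rule cInf_lower) (use that bb[unfolded I_def] in auto)
  have l0: "l \<ge> 0" unfolding l_def by (rule cInf_greatest[OF ne]) (auto simp: I_def intro: V_ge)
  have "((\<lambda>t. V (x t)) \<longlongrightarrow> l) at_top"
  proof (rule tendstoI)
    fix e :: real assume e: "e > 0"
    have "Inf I < l + e" using e l_def by simp
    then have "\<exists>v\<in>I. v < l + e" by (subst (asm) cInf_less_iff[OF ne bb])
    then obtain T where T: "T \<ge> 0" "V (x T) < l + e" unfolding I_def by auto
    show "\<forall>\<^sub>F t in at_top. dist (V (x t)) l < e"
      unfolding eventually_at_top_linorder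
    proof (intro exI[of _ T] allI impI)
      fix t assume t: "t \<ge> T"
      have "V (x t) \<le> V (x T)" using V_mono[OF sol T(1) t] .
      then show "dist (V (x t)) l < e" using lle[of t] t T by (simp add: dist_real_def)
    qed
  qed
  then show ?thesis using that l0 lle by blast
qed


definition "Sb V0 = {-(V0 / (K * c) + 1)..V0 / (K * c) + 1} \<times> {-sqrt (2 * V0)..sqrt (2 * V0)} \<times> {-sqrt (2 * V0 / sL)..sqrt (2 * V0 / sL)}"

lemma V_box: "V p \<le> V0 \<Longrightarrow> p \<in> Sb V0"
proof -
  assume h: "V p \<le> V0"
  obtain z u w where p: "p = (z, u, w)" by (cases p) auto
  have Kc: "K * c > 0" using K c by simp
  have t1: "0 \<le> K * G z" "0 \<le> u^2 / 2" "0 \<le> sL / 2 * w^2" using K G_ge sL(1) by auto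
  have Vp: "V p = K * G z + u^2 / 2 + sL / 2 * w^2" by (simp add: p V_def)
  have "K * c * (\<bar>z\<bar> - 1) \<le> K * G z" using G_lin[of z] K by (simp add: mult.assoc mult_left_mono)
  then have "K * c * (\<bar>z\<bar> - 1) \<le> V0" using h Vp t1 by linarith
  then have "\<bar>z\<bar> - 1 \<le> V0 / (K * c)" using Kc by (simp add: pos_le_divide_eq mult.commute)
  then have zb: "\<bar>z\<bar> \<le> V0 / (K * c) + 1" by linarith
  have "u^2 \<le> 2 * V0" using h Vp t1 by linarith
  then have "sqrt (u^2) \<le> sqrt (2 * V0)" by (rule real_sqrt_le_mono)
  then have ub: "\<bar>u\<bar> \<le> sqrt (2 * V0)" by simp
  have "sL / 2 * w^2 \<le> V0" using h Vp t1 by linarith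
  then have "w^2 \<le> 2 * V0 / sL" using sL(1) by (simp add: pos_le_divide_eq mult.commute)
  then have "sqrt (w^2) \<le> sqrt (2 * V0 / sL)" by (rule real_sqrt_le_mono)
  then have wb: "\<bar>w\<bar> \<le> sqrt (2 * V0 / sL)" by simp
  show ?thesis using zb ub wb unfolding p Sb_def by (auto simp: abs_le_iff)
qed

definition "Hd p = 2 * phi (fst p) * (c * exp (fst p) * (c * (1 - exp (fst p)) - fst (snd p) + b / B * snd (snd p)))
   + 2 * snd (snd p) * (a * c * (exp (fst p) - 1) - B * snd (snd p))"

lemma hh_deriv:
  assumes "(x has_vector_derivative F (x t)) (at t within S)"
  shows "((\<lambda>t. hh (x t)) has_real_derivative Hd (x t)) (at t within S)"
proof -
  obtain z u w where xt: "x t = (z, u, w)" by (cases "x t") auto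
  note d = comps[OF assms, unfolded xt F_eq, simplified]
  have e: "(\<lambda>t. hh (x t)) = (\<lambda>t. (c * (exp (fst (x t)) - 1))^2 + (snd (snd (x t)))^2)"
    by (simp add: hh_def phi_def)
  show ?thesis unfolding e
    apply (rule derivative_eq_intros d | simp)+
    using Bpos by (simp add: xt Hd_def phi_def field_simps power2_eq_square)
qed

lemma Hd_bound: "\<exists>Bd>0. \<forall>p\<in>Sb V0. \<bar>Hd p\<bar> \<le> Bd"
proof -
  have cpt: "compact (Sb V0)" unfolding Sb_def by (intro compact_Times compact_Icc)
  have "continuous_on UNIV Hd" unfolding Hd_def phi_def by (intro continuous_intros)
  then have "continuous_on (Sb V0) Hd" by (rule continuous_on_subset) auto
  then have "compact (Hd ` Sb V0)" using cpt by (rule compact_continuous_image)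
  then have "bounded (Hd ` Sb V0)" by (rule compact_imp_bounded)
  then show ?thesis unfolding bounded_pos by auto
qed


lemma h_lim:
  assumes sol: "is_solution F x"
  shows "((\<lambda>t. hh (x t)) \<longlongrightarrow> 0) at_top"
proof -
  define V0 where "V0 = V (x 0)"
  obtain Bd where Bd: "Bd > 0" "\<And>p. p \<in> Sb V0 \<Longrightarrow> \<bar>Hd p\<bar> \<le> Bd" using Hd_bound by blast
  have inS: "x t \<in> Sb V0" if "t \<ge> 0" for t
    using V_box V_mono[OF sol _ that] V0_def by auto
  have hlow: "hh (x t) - Bd * (s - t) \<le> hh (x s)" if ts: "0 \<le> t" "t \<le> s" for t s
  proof -
    define f where "f r = hh (x r) + Bd * r" for r
    have fd: "(f has_real_derivative Hd (x r) + Bd) (at r within {0..})" if "r \<ge> 0" for r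
      unfolding f_def using hh_deriv[OF sol_d[OF sol that]] by (auto intro!: derivative_eq_intros)
    have "f t \<le> f s"
    proof (rule DERIV_nonneg_imp_increasing_open[OF ts(2)])
      fix r assume r: "t < r" "r < s"
      then have "(f has_real_derivative Hd (x r) + Bd) (at r)" using fd[of r] at_pos[of r] ts by auto
      moreover have "0 \<le> Hd (x r) + Bd" using Bd(2)[OF inS[of r]] r ts by auto
      ultimately show "\<exists>y. (f has_real_derivative y) (at r) \<and> 0 \<le> y" by blast
    next
      show "continuous_on {t..s} f"
      proof (rule cont_from_deriv[OF _ ts(1)])
        fix r assume "r \<in> {t..s}"
        then show "\<exists>D. (f has_real_derivative D) (at r within {0..})" using fd[of r] ts by auto
      qed
    qed
    then show ?thesis unfolding f_def by (simp add: algebra_simps)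
  qed
  obtain l where l: "l \<ge> 0" "((\<lambda>t. V (x t)) \<longlongrightarrow> l) at_top" "\<And>t. t \<ge> 0 \<Longrightarrow> l \<le> V (x t)"
    using V_lim[OF sol] by blast
  have main: "\<exists>T. \<forall>t\<ge>T. hh (x t) < 2 * \<delta>" if d: "\<delta> > 0" for \<delta>
  proof (rule ccontr)
    assume "\<not> ?thesis"
    then have big: "\<forall>T. \<exists>t\<ge>T. hh (x t) \<ge> 2 * \<delta>" by (auto simp: not_less)
    define r where "r = \<delta> / Bd"
    have r: "r > 0" using d Bd by (simp add: r_def)
    have ep: "gam * \<delta> * r > 0" using g12(3) d r by simp
    have "\<forall>\<^sub>F t in at_top. dist (V (x t)) l < gam * \<delta> * r" using l(2) ep by (rule tendstoD)
    then obtain T0 where T0: "\<And>t. t \<ge> T0 \<Longrightarrow> dist (V (x t)) l < gam * \<delta> * r"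
      unfolding eventually_at_top_linorder by blast
    obtain t where t: "t \<ge> max T0 0" "hh (x t) \<ge> 2 * \<delta>" using big by blast
    have "V (x (t + r)) + gam * \<delta> * (t + r - t) \<le> V (x t)"
    proof (rule V_dec)
      fix s assume s: "s \<in> {t..t + r}"
      show "(x has_vector_derivative F (x s)) (at s within {0..})" using s t sol_d[OF sol] by auto
      have "hh (x t) - Bd * (s - t) \<le> hh (x s)" using hlow[of t s] s t by auto
      moreover have "Bd * (s - t) \<le> Bd * r" using s Bd by (intro mult_left_mono) auto
      moreover have "Bd * r = \<delta>" using Bd by (simp add: r_def)
      ultimately show "\<delta> \<le> hh (x s)" using t by linarith
    qed (use t r in auto)
    moreover have "V (x t) < l + gam * \<delta> * r" using T0[of t] t by (simp add: dist_real_def)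
    moreover have "l \<le> V (x (t + r))" using l(3)[of "t + r"] t r by simp
    ultimately show False by simp
  qed
  show ?thesis
  proof (rule tendstoI)
    fix e :: real assume e: "e > 0"
    obtain T where T: "\<And>t. t \<ge> T \<Longrightarrow> hh (x t) < 2 * (e / 2)" using main[of "e/2"] e by auto
    show "\<forall>\<^sub>F t in at_top. dist (hh (x t)) 0 < e"
      unfolding eventually_at_top_linorder dist_real_def
    proof (intro exI[of _ T] allI impI)
      fix t assume "t \<ge> T"
      then show "\<bar>hh (x t) - 0\<bar> < e" using T[of t] hh_ge[of "x t"] by simp
    qed
  qed
qed

end

context sys begin

lemma sq_lim: "((\<lambda>t. (f t)^2) \<longlongrightarrow> 0) Fl \<Longrightarrow> ((f::'a \<Rightarrow> real) \<longlongrightarrow> 0) Fl"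
proof -
  assume "((\<lambda>t. (f t)^2) \<longlongrightarrow> 0) Fl"
  then have "((\<lambda>t. sqrt ((f t)^2)) \<longlongrightarrow> sqrt 0) Fl" by (rule tendsto_real_sqrt)
  then have "((\<lambda>t. \<bar>f t\<bar>) \<longlongrightarrow> 0) Fl" by simp
  then show ?thesis by (simp add: tendsto_rabs_zero_iff)
qed

lemma squeeze0: "(\<And>t. 0 \<le> f t) \<Longrightarrow> (\<And>t. f t \<le> g t) \<Longrightarrow> (g \<longlongrightarrow> 0) Fl \<Longrightarrow> ((f::'a \<Rightarrow> real) \<longlongrightarrow> 0) Fl"
  by (rule tendsto_sandwich[of "\<lambda>_. 0" f Fl g]) auto

lemma ZW_lim:
  assumes sol: "is_solution F x"
  shows "((\<lambda>t. fst (x t)) \<longlongrightarrow> 0) at_top" "((\<lambda>t. snd (snd (x t))) \<longlongrightarrow> 0) at_top"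
proof -
  note h = h_lim[OF sol]
  have "((\<lambda>t. (phi (fst (x t)))^2) \<longlongrightarrow> 0) at_top"
    by (rule squeeze0[OF _ _ h]) (auto simp: hh_def)
  then have p: "((\<lambda>t. phi (fst (x t))) \<longlongrightarrow> 0) at_top" by (rule sq_lim)
  have "((\<lambda>t. (snd (snd (x t)))^2) \<longlongrightarrow> 0) at_top"
    by (rule squeeze0[OF _ _ h]) (auto simp: hh_def)
  then show "((\<lambda>t. snd (snd (x t))) \<longlongrightarrow> 0) at_top" by (rule sq_lim)
  have e: "ln (1 + phi z / c) = z" for z using c by (simp add: phi_def)
  have "((\<lambda>t. ln (1 + phi (fst (x t)) / c)) \<longlongrightarrow> ln (1 + 0 / c)) at_top"
    by (intro tendsto_ln tendsto_add tendsto_divide p tendsto_const) (use c in auto)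
  then show "((\<lambda>t. fst (x t)) \<longlongrightarrow> 0) at_top" unfolding e by simp
qed


lemma U_lim:
  assumes sol: "is_solution F x"
  shows "((\<lambda>t. fst (snd (x t))) \<longlongrightarrow> 0) at_top"
proof -
  define Z where "Z t = fst (x t)" for t
  define U where "U t = fst (snd (x t))" for t
  define W where "W t = snd (snd (x t))" for t
  have xt: "x t = (Z t, U t, W t)" for t by (simp add: Z_def U_def W_def)
  obtain l where l: "l \<ge> 0" "((\<lambda>t. V (x t)) \<longlongrightarrow> l) at_top" "\<And>t. t \<ge> 0 \<Longrightarrow> l \<le> V (x t)"
    using V_lim[OF sol] by blast
  have Zl: "(Z \<longlongrightarrow> 0) at_top" and Wl: "(W \<longlongrightarrow> 0) at_top"
    using ZW_lim[OF sol] unfolding Z_def W_def by auto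
  have GZ: "((\<lambda>t. K * G (Z t)) \<longlongrightarrow> K * (c * (exp 0 - 1 - 0))) at_top"
    unfolding G_def by (intro tendsto_intros Zl)
  have Ve: "(U t)^2 = 2 * (V (x t) - K * G (Z t) - sL / 2 * (W t)^2)" for t
    by (simp add: V_def xt)
  have "((\<lambda>t. 2 * (V (x t) - K * G (Z t) - sL / 2 * (W t)^2)) \<longlongrightarrow> 2 * (l - K * (c * (exp 0 - 1 - 0)) - sL / 2 * 0^2)) at_top"
    by (intro tendsto_intros l(2) GZ Wl)
  then have U2: "((\<lambda>t. (U t)^2) \<longlongrightarrow> 2 * l) at_top" unfolding Ve by simp
  have Zd: "(Z has_real_derivative c * (1 - exp (Z t)) - U t + b / B * W t) (at t within {0..})" if "t \<ge> 0" for t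
    using comps(1)[OF sol_d[OF sol that]] unfolding xt F_eq Z_def[symmetric] by simp
  have Ud: "\<exists>D. (U has_real_derivative D) (at t within {0..})" if "t \<ge> 0" for t
    using comps(2)[OF sol_d[OF sol that]] unfolding U_def by blast
  have Zc: "\<exists>D. (Z has_real_derivative D) (at t within {0..})" if "t \<ge> 0" for t
    using Zd[OF that] by blast
  have l0: "l = 0"
  proof (rule ccontr)
    assume "l \<noteq> 0"
    then have lp: "l > 0" using l(1) by simp
    define r where "r = sqrt l"
    have r: "r > 0" "r^2 = l" using lp by (auto simp: r_def)
    have phl: "((\<lambda>t. \<bar>c * (1 - exp (Z t))\<bar>) \<longlongrightarrow> \<bar>c * (1 - exp 0)\<bar>) at_top"
      by (intro tendsto_intros Zl)
    have bwl: "((\<lambda>t. \<bar>b / B * W t\<bar>) \<longlongrightarrow> \<bar>b / B * 0\<bar>) at_top"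
      by (intro tendsto_intros Wl)
    have zal: "((\<lambda>t. \<bar>Z t\<bar>) \<longlongrightarrow> \<bar>0\<bar>) at_top" by (intro tendsto_intros Zl)
    have ev: "\<forall>\<^sub>F t in at_top. l < (U t)^2 \<and> \<bar>c * (1 - exp (Z t))\<bar> < r / 4 \<and> \<bar>b / B * W t\<bar> < r / 4
        \<and> \<bar>Z t\<bar> < 1 \<and> 1 \<le> t"
    proof -
      have e1: "\<forall>\<^sub>F t in at_top. l < (U t)^2" using order_tendstoD(1)[OF U2, of l] lp by simp
      have e2: "\<forall>\<^sub>F t in at_top. \<bar>c * (1 - exp (Z t))\<bar> < r / 4" using order_tendstoD(2)[OF phl, of "r/4"] r by simp
      have e3: "\<forall>\<^sub>F t in at_top. \<bar>b / B * W t\<bar> < r / 4" using order_tendstoD(2)[OF bwl, of "r/4"] r by simp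
      have e4: "\<forall>\<^sub>F t in at_top. \<bar>Z t\<bar> < 1" using order_tendstoD(2)[OF zal, of 1] by simp
      have e5: "\<forall>\<^sub>F t in at_top. 1 \<le> (t::real)" by (rule eventually_ge_at_top)
      show ?thesis using e1 e2 e3 e4 e5 by eventually_elim auto
    qed
    then obtain T where T: "\<And>t. t \<ge> T \<Longrightarrow> l < (U t)^2 \<and> \<bar>c * (1 - exp (Z t))\<bar> < r / 4 \<and> \<bar>b / B * W t\<bar> < r / 4
        \<and> \<bar>Z t\<bar> < 1 \<and> 1 \<le> t"
      unfolding eventually_at_top_linorder by blast
    have T1: "T \<ge> 1" using T[of T] by simp
    define s where "s = T + 4 / r"
    have Ts: "T \<le> s" using r by (simp add: s_def)
    have Uc: "continuous_on {T..t} U" if "t \<ge> T" for t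
      by (rule cont_from_deriv) (use Ud T1 in auto)
    have Zcs: "continuous_on {T..s} (\<lambda>t. Z t + q * t)" for q
    proof (rule cont_from_deriv)
      fix t assume "t \<in> {T..s}"
      then have "t \<ge> 0" using T1 by simp
      then obtain D where "(Z has_real_derivative D) (at t within {0..})" using Zc by blast
      then show "\<exists>D. ((\<lambda>t. Z t + q * t) has_real_derivative D) (at t within {0..})"
        by (auto intro!: derivative_eq_intros)
    qed (use T1 in auto)
    have Unz: "U t \<noteq> 0" if "t \<ge> T" for t using T[OF that] lp by auto
    have Zdi: "((\<lambda>t. Z t + q * t) has_real_derivative c * (1 - exp (Z t)) - U t + b / B * W t + q) (at t)"
      if "T < t" for t q
    proof -
      have "t > 0" using that T1 by simp
      then show ?thesis using Zd[of t] at_pos[of t] by (auto intro!: derivative_eq_intros)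
    qed
    show False
    proof (cases "U T > 0")
      case True
      have Ugt: "U t > r" if tT: "t \<ge> T" for t
      proof -
        have "U t > 0"
        proof (rule ccontr)
          assume "\<not> U t > 0"
          then obtain \<xi> where "\<xi> \<ge> T" "\<xi> \<le> t" "U \<xi> = 0"
            using IVT2'[of U t 0 T] True tT Uc[OF tT] by auto
          then show False using Unz by auto
        qed
        moreover have "r^2 < (U t)^2" using T[OF tT] r by simp
        ultimately show ?thesis by (intro power_less_imp_less_base[of r 2]) auto
      qed
      have "Z s + r / 2 * s \<le> Z T + r / 2 * T"
      proof (rule DERIV_nonpos_imp_decreasing_open[OF Ts])
        fix t assume t: "T < t" "t < s"
        have a: "\<bar>c * (1 - exp (Z t))\<bar> < r / 4" "\<bar>b / B * W t\<bar> < r / 4" using T[of t] t by auto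
        have "c * (1 - exp (Z t)) < r / 4" "b / B * W t < r / 4" using a by (simp_all only: abs_less_iff)
        then have "c * (1 - exp (Z t)) - U t + b / B * W t + r / 2 \<le> 0"
          using Ugt[of t] t by linarith
        then show "\<exists>y. ((\<lambda>t. Z t + r / 2 * t) has_real_derivative y) (at t) \<and> y \<le> 0"
          using Zdi[of t "r/2"] t by blast
      qed (rule Zcs)
      moreover have "r / 2 * s = r / 2 * T + 2" using r by (simp add: s_def field_simps)
      ultimately have "Z s \<le> Z T - 2" by linarith
      then show False using T[of s] T[of T] Ts by auto
    next
      case False
      then have UT: "U T < 0" using Unz[of T] by simp
      have Ult: "U t < - r" if tT: "t \<ge> T" for t
      proof -
        have "U t < 0"
        proof (rule ccontr)
          assume "\<not> U t < 0"
          then obtain \<xi> where "\<xi> \<ge> T" "\<xi> \<le> t" "U \<xi> = 0"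
            using IVT'[of U T 0 t] UT tT Uc[OF tT] by auto
          then show False using Unz by auto
        qed
        moreover have "r^2 < (- U t)^2" using T[OF tT] r by simp
        ultimately have "r < - U t" by (intro power_less_imp_less_base[of r 2]) auto
        then show ?thesis by simp
      qed
      have "Z T + (- r / 2) * T \<le> Z s + (- r / 2) * s"
      proof (rule DERIV_nonneg_imp_increasing_open[OF Ts])
        fix t assume t: "T < t" "t < s"
        have a: "\<bar>c * (1 - exp (Z t))\<bar> < r / 4" "\<bar>b / B * W t\<bar> < r / 4" using T[of t] t by auto
        have "- (c * (1 - exp (Z t))) < r / 4" "- (b / B * W t) < r / 4" using a by (simp_all only: abs_less_iff)
        then have "0 \<le> c * (1 - exp (Z t)) - U t + b / B * W t + - r / 2"
          using Ult[of t] t by linarith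
        then show "\<exists>y. ((\<lambda>t. Z t + - r / 2 * t) has_real_derivative y) (at t) \<and> 0 \<le> y"
          using Zdi[of t "- r/2"] t by blast
      qed (rule Zcs)
      moreover have "(- r / 2) * s = (- r / 2) * T - 2" using r by (simp add: s_def field_simps)
      ultimately have "Z T + 2 \<le> Z s" by linarith
      then show False using T[of s] T[of T] Ts by auto
    qed
  qed
  have "((\<lambda>t. (U t)^2) \<longlongrightarrow> 0) at_top" using U2 l0 by simp
  then have "(U \<longlongrightarrow> 0) at_top" by (rule sq_lim)
  then show ?thesis unfolding U_def by assumption
qed

end

context sys begin

lemma conv: "is_solution F x \<Longrightarrow> (x \<longlongrightarrow> 0) at_top"
proof -
  assume sol: "is_solution F x"
  have "((\<lambda>t. (fst (x t), fst (snd (x t)), snd (snd (x t)))) \<longlongrightarrow> (0, 0, 0)) at_top"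
    by (intro tendsto_Pair ZW_lim[OF sol] U_lim[OF sol])
  then show ?thesis by (simp add: zero_prod_def)
qed

lemma V0: "V 0 = 0" by (simp add: V_def G_def zero_prod_def)

lemma V_big:
  assumes e: "e > 0" and p: "norm p \<ge> e"
  shows "min (K * min (G (e/3)) (G (-(e/3)))) (min ((e/3)^2/2) (sL/2*(e/3)^2)) \<le> V p"
proof -
  obtain z u w where pe: "p = (z, u, w)" by (cases p) auto
  have Vp: "V p = K * G z + u^2 / 2 + sL / 2 * w^2" by (simp add: pe V_def)
  have t1: "0 \<le> K * G z" "0 \<le> u^2 / 2" "0 \<le> sL / 2 * w^2" using K G_ge sL(1) by auto
  have "norm p \<le> \<bar>z\<bar> + (\<bar>u\<bar> + \<bar>w\<bar>)"
    using norm_Pair_le[of z "(u, w)"] norm_Pair_le[of u w] pe by simp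
  then have "e/3 \<le> \<bar>z\<bar> \<or> e/3 \<le> \<bar>u\<bar> \<or> e/3 \<le> \<bar>w\<bar>" using p by linarith
  then show ?thesis
  proof (elim disjE)
    assume h: "e/3 \<le> \<bar>z\<bar>"
    have "min (G (e/3)) (G (-(e/3))) \<le> G z" using G_mono[of "e/3" z] h e by simp
    then have "K * min (G (e/3)) (G (-(e/3))) \<le> K * G z" using K by (intro mult_left_mono) auto
    then show ?thesis using Vp t1 by linarith
  next
    assume h: "e/3 \<le> \<bar>u\<bar>"
    have "(e/3)^2 \<le> \<bar>u\<bar>^2" using h e by (intro power_mono) auto
    then have "(e/3)^2/2 \<le> u^2/2" by simp
    then show ?thesis using Vp t1 by linarith
  next
    assume h: "e/3 \<le> \<bar>w\<bar>"
    have "(e/3)^2 \<le> \<bar>w\<bar>^2" using h e by (intro power_mono) auto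
    then have "sL/2*(e/3)^2 \<le> sL/2*w^2" using sL(1) by (intro mult_left_mono) auto
    then show ?thesis using Vp t1 by linarith
  qed
qed

lemma stable: "e > 0 \<Longrightarrow> \<exists>d>0. \<forall>x. is_solution F x \<and> norm (x 0) < d \<longrightarrow> (\<forall>t\<ge>0. norm (x t) < e)"
proof -
  assume e: "e > 0"
  define \<eta> where "\<eta> = min (K * min (G (e/3)) (G (-(e/3)))) (min ((e/3)^2/2) (sL/2*(e/3)^2))"
  have "G (e/3) > 0" "G (-(e/3)) > 0" using G_pos e by auto
  then have \<eta>: "\<eta> > 0" unfolding \<eta>_def using K sL(1) e by auto
  have "continuous_on UNIV V" unfolding V_def G_def by (intro continuous_intros) auto
  then have "isCont V 0" by (metis continuous_on_eq_continuous_at open_UNIV UNIV_I)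
  then have "(V \<longlongrightarrow> 0) (at 0)" using V0 by (simp add: isCont_def)
  then have "\<forall>\<^sub>F p in at 0. dist (V p) 0 < \<eta>" using \<eta> by (rule tendstoD)
  then obtain d where d: "d > 0" "\<And>p. p \<noteq> 0 \<Longrightarrow> dist p 0 < d \<Longrightarrow> dist (V p) 0 < \<eta>"
    unfolding eventually_at by auto
  have Vs: "V p < \<eta>" if "norm p < d" for p
  proof (cases "p = 0")
    case True then show ?thesis using V0 \<eta> by simp
  next
    case False then show ?thesis using d(2)[of p] that V_ge[of p] by (simp add: dist_norm)
  qed
  show ?thesis
  proof (intro exI[of _ d] conjI allI impI d(1))
    fix x t assume h: "is_solution F x \<and> norm (x 0) < d" and t: "0 \<le> (t::real)"
    have "V (x t) \<le> V (x 0)" using V_mono[of x 0 t] h t by auto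
    then have "V (x t) < \<eta>" using Vs[of "x 0"] h by simp
    then show "norm (x t) < e" using V_big[OF e, of "x t"] unfolding \<eta>_def[symmetric] by linarith
  qed
qed

lemma gas: "globally_asymptotically_stable F"
  unfolding globally_asymptotically_stable_def using exists_sol stable conv by blast

end

theorem theorem6p2:
  fixes \<beta>1 \<beta>2 \<nu>1 \<nu>2 \<rho>1 \<rho>2 :: real
  assumes "\<beta>1 > 0" "\<beta>2 > 0"
    and "0 < \<nu>1" "\<nu>1 < 1" "0 < \<nu>2" "\<nu>2 < 1"
    and "0 < \<rho>1" "\<rho>1 < 1" "0 < \<rho>2" "\<rho>2 < 1"
  defines "A \<equiv> \<beta>1 * (1 - \<nu>1) + \<beta>2 * (1 - \<nu>2)"
    and "a \<equiv> \<beta>1 * (1 - \<nu>1) - \<beta>2 * (1 - \<nu>2)"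
    and "B \<equiv> \<beta>1 * \<nu>1 + \<beta>2 * \<nu>2"
    and "b \<equiv> - \<beta>1 * \<nu>1 + \<beta>2 * \<nu>2"
    and "D \<equiv> \<beta>1 * (1 - \<nu>1) * (1 - \<rho>1) + \<beta>2 * (1 - \<nu>2) * (1 - \<rho>2)"
    and "d \<equiv> - \<beta>1 * (1 - \<nu>1) * (1 - \<rho>1) + \<beta>2 * (1 - \<nu>2) * (1 - \<rho>2)"
  assumes pos: "1 - (D * B - b * d) / (A * B + b * a) > 0"
    and "B\<^sup>2 > a * b"
  shows "globally_asymptotically_stable
           (vf A a B b (ln (1 - (D * B - b * d) / (A * B + b * a))))"
proof -
  have Bp: "B > 0" unfolding B_def using assms(1-6) by (simp add: add_pos_pos)
  have e: "A * B + b * a = 2 * (\<beta>1 * (1 - \<nu>1) * (\<beta>2 * \<nu>2) + \<beta>2 * (1 - \<nu>2) * (\<beta>1 * \<nu>1))"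
    unfolding A_def B_def a_def b_def by (simp add: algebra_simps)
  have "0 < \<beta>1 * (1 - \<nu>1) * (\<beta>2 * \<nu>2) + \<beta>2 * (1 - \<nu>2) * (\<beta>1 * \<nu>1)"
    using assms(1-6) by (intro add_pos_pos mult_pos_pos) auto
  then have "A * B + b * a > 0" using e by simp
  then have "(A * B + b * a) / B > 0" using Bp by simp
  moreover have "(A * B + b * a) / B = A + b * a / B" using Bp by (simp add: field_simps)
  ultimately have Kp: "A + b * a / B > 0" by simp
  interpret sys A a B b "ln (1 - (D * B - b * d) / (A * B + b * a))"
    by unfold_locales (use Bp Kp assms(18) in auto)
  show ?thesis using gas unfolding F_def .
qed

end
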